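(* Let $\varphi=\frac{1+\sqrt5}{2}$, $F_n=\frac{\varphi^n-(-1/\varphi)^n}{\varphi+1/\varphi}$, $F_0!=1$, $F_n!=F_1\cdots F_n$. For commuting variables $x,y$ and $n\ge1$ define the Golden binomial $$(x+y)_F^n=\prod_{k=0}^{n-1}\big(x+(-1)^k\varphi^{\,n-1-2k}y\big)=(x+\varphi^{n-1}y)(x-\varphi^{n-3}y)\cdots(x+(-1)^{n-1}\varphi^{-n+1}y),$$ and $(x+y)_F^0=1$. Then for every $n\ge0$, $$(x+y)_F^n=\sum_{k=0}^n\frac{F_n!}{F_{n-k}!\,F_k!}(-1)^{\frac{k(k-1)}2}x^{n-k}y^k.$$ *)

theory Defs
  imports Complex_Main
begin

definition golden :: real where "golden = (1 + sqrt 5) / 2"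

definition fibo :: "nat \<Rightarrow> real" where
  "fibo n = (golden ^ n - (- 1 / golden) ^ n) / (golden + 1 / golden)"

definition fibo_fact :: "nat \<Rightarrow> real" where
  "fibo_fact n = (\<Prod>i=1..n. fibo i)"

definition golden_binom :: "real \<Rightarrow> real \<Rightarrow> nat \<Rightarrow> real" where
  "golden_binom x y n =
     (\<Prod>k=0..<n. x + (-1) ^ k * golden powi (int n - 1 - 2 * int k) * y)"

end

theory Submission
  imports Defs
begin

lemma g_gt1: "golden > 1"
proof -
  have "sqrt 5 > 1" by (simp add: real_less_rsqrt)
  thus ?thesis unfolding golden_def by simp
qed

lemma g_nz: "golden \<noteq> 0" using g_gt1 by simp

lemma gh: "golden * (-1/golden) = -1" using g_nz by simp

lemma fibo_add: "fibo (k+m) = golden^k * fibo m + (-1/golden)^m * fibo k"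
proof -
  define g where "g = golden"
  define h where "h = -1/golden"
  define D where "D = golden + 1/golden"
  have fg: "\<And>j. fibo j = (g^j - h^j)/D" unfolding fibo_def g_def h_def D_def by simp
  have "fibo (k+m) = (g^(k+m) - h^(k+m))/D" by (rule fg)
  also have "\<dots> = (g^k*(g^m-h^m) + h^m*(g^k-h^k))/D" by (simp add: power_add algebra_simps)
  also have "\<dots> = g^k*((g^m-h^m)/D) + h^m*((g^k-h^k)/D)" by (simp add: add_divide_distrib)
  also have "\<dots> = g^k * fibo m + h^m * fibo k" by (simp only: fg)
  finally show ?thesis unfolding g_def h_def .
qed

lemma fibo_nz: "n \<ge> 1 \<Longrightarrow> fibo n \<noteq> 0"
proof
  assume n: "n \<ge> 1" and f: "fibo n = 0"
  have D: "golden + 1/golden > 0" using g_gt1 by (simp add: add_pos_pos)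
  have eq: "golden^n = (-1/golden)^n" using f D unfolding fibo_def by simp
  have "golden^n > 1" using g_gt1 n by (simp add: one_less_power)
  moreover have "\<bar>-1/golden\<bar> < 1" using g_gt1 by simp
  hence "\<bar>(-1/golden)^n\<bar> \<le> 1" by (simp add: power_abs power_le_one)
  hence "(-1/golden)^n \<le> 1" by (rule abs_le_D1)
  ultimately show False using eq by linarith
qed

lemma ff_Suc: "fibo_fact (Suc j) = fibo_fact j * fibo (Suc j)"
  unfolding fibo_fact_def by (simp add: prod.nat_ivl_Suc' mult.commute)

lemma ff_nz: "fibo_fact n \<noteq> 0"
  by (induction n) (auto simp: fibo_fact_def fibo_nz ff_Suc simp del: prod.cl_ivl_Suc)

lemma ff0: "fibo_fact 0 = 1" unfolding fibo_fact_def by simp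

lemma cpascal:
  "fibo_fact (k+m+2)/(fibo_fact(m+1)*fibo_fact(k+1)) =
   golden^(k+1)*fibo_fact(k+m+1)/(fibo_fact m*fibo_fact(k+1))
   + (-1/golden)^(m+1)*fibo_fact(k+m+1)/(fibo_fact(m+1)*fibo_fact k)"
proof -
  have F: "fibo (k+m+2) = golden^(k+1) * fibo (m+1) + (-1/golden)^(m+1) * fibo (k+1)"
    using fibo_add[of "k+1" "m+1"] by simp
  have e1: "fibo_fact (k+m+2) = fibo_fact (k+m+1) * fibo (k+m+2)"
    using ff_Suc[of "k+m+1"] by simp
  have e2: "fibo_fact (m+1) = fibo_fact m * fibo (m+1)" using ff_Suc[of m] by simp
  have e3: "fibo_fact (k+1) = fibo_fact k * fibo (k+1)" using ff_Suc[of k] by simp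
  have nz: "fibo (m+1) \<noteq> 0" "fibo (k+1) \<noteq> 0" "fibo_fact m \<noteq> 0" "fibo_fact k \<noteq> 0"
    "fibo_fact (k+m+1) \<noteq> 0"
    by (auto simp: fibo_nz ff_nz)
  show ?thesis unfolding e1 e2 e3 F using nz by (simp add: field_simps)
qed

definition sg :: "nat \<Rightarrow> real" where "sg k = (-1::real)^(k*(k-1) div 2)"

lemma sg_Suc: "sg (Suc k) = (-1)^k * sg k"
proof (cases k)
  case 0 thus ?thesis by (simp add: sg_def)
next
  case (Suc m)
  have "Suc k * (Suc k - 1) = k * (k-1) + 2 * k" using Suc by simp
  hence e: "Suc k * (Suc k - 1) div 2 = k * (k-1) div 2 + k" by simp
  show ?thesis unfolding sg_def e power_add by (rule mult.commute)
qed

definition A :: "nat \<Rightarrow> nat \<Rightarrow> real" where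
  "A n k = fibo_fact n / (fibo_fact (n - k) * fibo_fact k) * sg k"

definition Q :: "real \<Rightarrow> real \<Rightarrow> nat \<Rightarrow> real" where
  "Q x y n = (\<Prod>k=0..<n. x + golden^(n-1-k) * (-1/golden)^k * y)"

lemma Q_Suc: "Q x y (Suc n) = (x + (-1/golden)^n * y) * Q x (golden*y) n"
proof -
  have "Q x y (Suc n) = (\<Prod>k=0..<n. x + golden^(n-k) * (-1/golden)^k * y) * (x + (-1/golden)^n * y)"
    unfolding Q_def by simp
  also have "(\<Prod>k=0..<n. x + golden^(n-k) * (-1/golden)^k * y) = Q x (golden*y) n"
    unfolding Q_def
  proof (rule prod.cong)
    fix k assume "k \<in> {0..<n}"
    hence "n - k = Suc (n-1-k)" by auto
    thus "x + golden^(n-k) * (-1/golden)^k * y = x + golden^(n-1-k) * (-1/golden)^k * (golden*y)"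
      by simp
  qed simp
  finally show ?thesis by simp
qed

lemma aux_alg:
  fixes P a G b H c gk hn t s :: real
  assumes "P = G*a/b + H*a/c" "gk*hn = t*H"
  shows "P*(t*s) = a/b*(t*s)*G + a/c*s*gk*hn"
proof -
  have "a/c*s*gk*hn = a/c*s*(gk*hn)" by (simp add: mult.assoc)
  also have "\<dots> = a/c*s*(t*H)" using assms(2) by simp
  finally have e: "a/c*s*gk*hn = a/c*s*(t*H)" .
  show ?thesis unfolding e assms(1) by (simp add: algebra_simps)
qed

lemma A_mid: assumes "k < n"
  shows "A (Suc n) (Suc k) = A n (Suc k) * golden^(Suc k) + A n k * golden^k * (-1/golden)^n"
proof -
  define m where "m = n - k - 1"
  have n: "n = k + m + 1" using assms unfolding m_def by simp
  have hp: "golden^k * (-1/golden)^n = (-1)^k * (-1/golden)^(m+1)"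
  proof -
    have "(-1/golden)^n = (-1/golden)^k * (-1/golden)^(m+1)"
      unfolding n by (metis add.assoc power_add)
    hence "golden^k * (-1/golden)^n = golden^k * (-1/golden)^k * (-1/golden)^(m+1)"
      by (simp only: mult.assoc)
    also have "golden^k * (-1/golden)^k = (golden * (-1/golden))^k"
      by (rule power_mult_distrib[symmetric])
    also have "(golden * (-1/golden))^k = (-1)^k" by (simp only: gh)
    finally show ?thesis .
  qed
  have n1: "Suc n = k+m+2" and n2: "Suc n - Suc k = m+1" and n3: "Suc k = k+1"
    and n4: "n - Suc k = m" and n5: "n - k = m+1" and n6: "k+m+2-(k+1) = m+1" using n by simp_all
  have c: "A (Suc n) (Suc k) = fibo_fact (k+m+2)/(fibo_fact(m+1)*fibo_fact(k+1)) * ((-1)^k * sg k)"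
    unfolding A_def n2 n1 sg_Suc by (simp only: n3 n6)
  have d1: "A n (Suc k) = fibo_fact (k+m+1)/(fibo_fact m*fibo_fact(k+1)) * ((-1)^k * sg k)"
    unfolding A_def n4 sg_Suc unfolding n by (simp only: n3)
  have d2: "A n k = fibo_fact (k+m+1)/(fibo_fact (m+1)*fibo_fact k) * sg k"
    unfolding A_def n5 unfolding n ..
  show ?thesis unfolding c d1 d2 unfolding n3
    by (rule aux_alg[OF cpascal hp])
qed

lemma A_0: "A n 0 = 1" unfolding A_def sg_def using ff_nz[of n] by (simp add: ff0)

lemma A_nn: "A n n = sg n" unfolding A_def using ff_nz[of n] by (simp add: ff0)

lemma Q_sum: "Q x y n = (\<Sum>k=0..n. A n k * x^(n-k) * y^k)"
proof (induction n arbitrary: y)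
  case 0 thus ?case by (simp add: Q_def A_0)
next
  case (Suc n)
  define h where "h = -1/golden"
  define g where "g = golden"
  have "Q x y (Suc n) = (x + h^n*y) * (\<Sum>k=0..n. A n k * x^(n-k) * (g*y)^k)"
    using Q_Suc Suc.IH unfolding h_def g_def by simp
  also have "\<dots> = x * (\<Sum>k=0..n. A n k * x^(n-k) * (g*y)^k) + h^n*y * (\<Sum>k=0..n. A n k * x^(n-k) * (g*y)^k)"
    by (simp add: distrib_right)
  also have "x * (\<Sum>k=0..n. A n k * x^(n-k) * (g*y)^k) = (\<Sum>k=0..n. A n k * g^k * x^(Suc n-k) * y^k)"
    unfolding sum_distrib_left
    by (intro sum.cong refl) (simp add: power_mult_distrib Suc_diff_le)
  also have "h^n*y * (\<Sum>k=0..n. A n k * x^(n-k) * (g*y)^k) = (\<Sum>k=0..n. A n k * g^k * h^n * x^(n-k) * y^(Suc k))"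
    unfolding sum_distrib_left
    by (intro sum.cong refl) (simp add: power_mult_distrib)
  also have "(\<Sum>k=0..n. A n k * g^k * x^(Suc n-k) * y^k)
      = A n 0 * x^(Suc n) + (\<Sum>k=0..<n. A n (Suc k) * g^(Suc k) * x^(n-k) * y^(Suc k))"
  proof (cases n)
    case 0 thus ?thesis by simp
  next
    case (Suc n')
    show ?thesis unfolding Suc
      by (subst sum.atLeast0_atMost_Suc_shift) (simp add: atLeastLessThanSuc_atLeastAtMost)
  qed
  also have "(\<Sum>k=0..n. A n k * g^k * h^n * x^(n-k) * y^(Suc k))
      = (\<Sum>k=0..<n. A n k * g^k * h^n * x^(n-k) * y^(Suc k)) + A n n * g^n * h^n * y^(Suc n)"
    by (simp add: sum.atLeast0_atMost_Suc atLeastLessThanSuc_atLeastAtMost[symmetric])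
  finally have L: "Q x y (Suc n) = A n 0 * x^(Suc n)
      + (\<Sum>k=0..<n. (A n (Suc k) * g^(Suc k) + A n k * g^k * h^n) * x^(n-k) * y^(Suc k))
      + A n n * g^n * h^n * y^(Suc n)"
    by (simp add: sum.distrib algebra_simps)
  have R: "(\<Sum>k=0..Suc n. A (Suc n) k * x^(Suc n-k) * y^k)
     = A (Suc n) 0 * x^(Suc n) + (\<Sum>k=0..<n. A (Suc n) (Suc k) * x^(n-k) * y^(Suc k))
       + A (Suc n) (Suc n) * y^(Suc n)"
    by (subst sum.atLeast0_atMost_Suc_shift) (simp add: sum.atLeast0_atMost_Suc atLeastLessThanSuc_atLeastAtMost[symmetric])
  have mid: "(\<Sum>k=0..<n. (A n (Suc k) * g^(Suc k) + A n k * g^k * h^n) * x^(n-k) * y^(Suc k))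
     = (\<Sum>k=0..<n. A (Suc n) (Suc k) * x^(n-k) * y^(Suc k))"
    by (rule sum.cong) (simp_all add: A_mid g_def h_def)
  have last: "A n n * g^n * h^n = A (Suc n) (Suc n)"
  proof -
    have "g^n*h^n = (-1)^n" using gh unfolding g_def h_def by (simp add: power_mult_distrib[symmetric])
    thus ?thesis by (simp add: A_nn sg_Suc mult.assoc)
  qed
  show ?case unfolding L R mid using last by (simp add: A_0)
qed

lemma gb_Q: "golden_binom x y n = Q x y n"
  unfolding golden_binom_def Q_def
proof (rule prod.cong)
  fix k assume "k \<in> {0..<n}"
  hence k: "k < n" by simp
  have e: "int n - 1 - 2 * int k = int (n-1-k) - int k" using k by simp
  have "golden powi (int n - 1 - 2 * int k) = golden^(n-1-k) / golden^k"
    unfolding e using g_nz by (simp add: power_int_diff power_int_of_nat)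
  hence "(-1) ^ k * golden powi (int n - 1 - 2 * int k) = golden^(n-1-k) * ((-1)^k / golden^k)"
    by simp
  also have "(-1)^k / golden^k = (-1/golden)^k" by (rule power_divide[symmetric])
  finally show "x + (-1) ^ k * golden powi (int n - 1 - 2 * int k) * y =
         x + golden ^ (n - 1 - k) * (- 1 / golden) ^ k * y"
    by simp
qed simp

theorem mainTheorem10:
  fixes x y :: real and n :: nat
  shows "golden_binom x y n =
    (\<Sum>k=0..n. fibo_fact n / (fibo_fact (n - k) * fibo_fact k)
        * (-1) ^ (k * (k - 1) div 2) * x ^ (n - k) * y ^ k)"
  unfolding gb_Q Q_sum A_def sg_def by (simp add: mult.assoc)

end
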